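(* Let $s\ge 1$ be a fixed integer. Consider a sequence of $(s+1)$-tuples of integers $2\le n_0\le n_1\le\dots\le n_s$ (indexed so that $n_s\to\infty$) such that $n_0=(\log n_s)^{\alpha}$ with $\alpha\ge 2\sqrt{\frac{\log n_s}{\log\log n_s}}$. For every $0\le i\le s-1$ let $k_i=\frac{\log n_s}{\log n_i}$, and let $x_0$ be the unique root of the equation $sx-1-\sum_{j=0}^{s-1}x^{\frac{k_j-1}{k_j}}=0$ in the interval $[1,\infty)$. Then $$ch(K_{n_0,\dots,n_s})=(1+o(1))\frac{\log n_s}{\log x_0}$$ as $n_s\to\infty$.
   Context: All logarithms are to base 2. For a graph $G=(V,E)$, the choice number $ch(G)$ is the minimum integer $k$ such that for every assignment of a list $S(v)$ of at least $k$ colors to each vertex $v\in V$, there is a proper vertex coloring of $G$ assigning to each vertex $v$ a color from $S(v)$. $K_{n_0,\dots,n_s}$ denotes the complete $(s+1)$-partite graph with parts of sizes $n_0,\dots,n_s$. *)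

theory Defs
  imports "HOL-Analysis.Analysis" "HOL-Library.Landau_Symbols"
begin

definition choosable :: "'a set \<Rightarrow> ('a \<Rightarrow> 'a \<Rightarrow> bool) \<Rightarrow> nat \<Rightarrow> bool" where
  "choosable V E k \<longleftrightarrow>
     (\<forall>S :: 'a \<Rightarrow> nat set. (\<forall>v\<in>V. finite (S v) \<and> k \<le> card (S v)) \<longrightarrow>
        (\<exists>c. (\<forall>v\<in>V. c v \<in> S v) \<and> (\<forall>u\<in>V. \<forall>v\<in>V. E u v \<longrightarrow> c u \<noteq> c v)))"

definition choice_number :: "'a set \<Rightarrow> ('a \<Rightarrow> 'a \<Rightarrow> bool) \<Rightarrow> nat" where
  "choice_number V E = (LEAST k. choosable V E k)"

text \<open>The complete (s+1)-partite graph K_{n_0,...,n_s}: vertex (i,j) is the j-th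
  vertex of part i (i \<le> s, j < n i); two vertices are adjacent iff they lie in
  different parts.\<close>

definition cmp_vertices :: "nat \<Rightarrow> (nat \<Rightarrow> nat) \<Rightarrow> (nat \<times> nat) set" where
  "cmp_vertices s n = {(i, j). i \<le> s \<and> j < n i}"

definition cmp_adj :: "nat \<times> nat \<Rightarrow> nat \<times> nat \<Rightarrow> bool" where
  "cmp_adj u v \<longleftrightarrow> fst u \<noteq> fst v"

definition ch_complete_multipartite :: "nat \<Rightarrow> (nat \<Rightarrow> nat) \<Rightarrow> nat" where
  "ch_complete_multipartite s n = choice_number (cmp_vertices s n) cmp_adj"

end

theory Submission
  imports Defs "HOL-Real_Asymp.Real_Asymp"
begin


lemma choosable_mono: assumes "choosable V E a" "a \<le> b" shows "choosable V E b"
  unfolding choosable_def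
proof (intro allI impI)
  fix S :: "'a \<Rightarrow> nat set" assume "\<forall>v\<in>V. finite (S v) \<and> b \<le> card (S v)"
  then have "\<forall>v\<in>V. finite (S v) \<and> a \<le> card (S v)" using assms(2) by auto
  then show "\<exists>c. (\<forall>v\<in>V. c v \<in> S v) \<and> (\<forall>u\<in>V. \<forall>v\<in>V. E u v \<longrightarrow> c u \<noteq> c v)"
    using assms(1) unfolding choosable_def by blast
qed

lemma cmp_vertices_Sigma: "cmp_vertices s n = Sigma {..s} (\<lambda>i. {..<n i})"
  unfolding cmp_vertices_def by auto

lemma finite_cmp_vertices: "finite (cmp_vertices s n)"
  unfolding cmp_vertices_Sigma by auto

lemma sum_cmp_vertices:
  "(\<Sum>v\<in>cmp_vertices s n. g (fst v)) = (\<Sum>i\<le>s. real (n i) * g i)"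
proof -
  have "(\<Sum>v\<in>cmp_vertices s n. g (fst v)) = (\<Sum>i\<le>s. \<Sum>j<n i. g (fst (i, j)))"
    unfolding cmp_vertices_Sigma using sum.Sigma[of "{..s}" "\<lambda>i. {..<n i}" "\<lambda>i j. g i"]
    by (simp add: split_def)
  then show ?thesis by simp
qed

lemma UB:
  fixes s k :: nat and n :: "nat \<Rightarrow> nat" and p :: "nat \<Rightarrow> real"
  assumes p01: "\<forall>i\<le>s. 0 \<le> p i \<and> p i \<le> 1" and psum: "(\<Sum>i\<le>s. p i) = 1"
    and small: "(\<Sum>i\<le>s. real (n i) * (1 - p i)^k) < 1"
  shows "choosable (cmp_vertices s n) cmp_adj k"
  unfolding choosable_def
proof (intro allI impI)
  fix S :: "nat \<times> nat \<Rightarrow> nat set"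
  assume HS: "\<forall>v\<in>cmp_vertices s n. finite (S v) \<and> k \<le> card (S v)"
  define V where "V = cmp_vertices s n"
  have finV: "finite V" unfolding V_def by (rule finite_cmp_vertices)
  define C where "C = \<Union> (S ` V)"
  have finC: "finite C" unfolding C_def using finV HS V_def by auto
  have SC: "v \<in> V \<Longrightarrow> S v \<subseteq> C" for v unfolding C_def by auto
  have fstV: "v \<in> V \<Longrightarrow> fst v \<le> s" for v unfolding V_def cmp_vertices_def by auto
  define F where "F = PiE C (\<lambda>_. {..s})"
  define w where "w f = (\<Prod>c\<in>C. p (f c))" for f :: "nat \<Rightarrow> nat"
  define bad where "bad f v = (\<forall>c\<in>S v. f c \<noteq> fst v)" for f :: "nat \<Rightarrow> nat" and v :: "nat \<times> nat"
  have finF: "finite F" unfolding F_def using finC by (simp add: finite_PiE)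
  have wpos: "f \<in> F \<Longrightarrow> 0 \<le> w f" for f
    unfolding w_def F_def using p01 by (auto intro!: prod_nonneg simp: PiE_def Pi_def)
  have sumw: "(\<Sum>f\<in>F. w f) = 1"
  proof -
    have "(\<Prod>c\<in>C. \<Sum>y\<le>s. p y) = (\<Sum>f\<in>F. w f)"
      unfolding F_def w_def by (rule prod_sum_PiE) (use finC in auto)
    then show ?thesis using psum by simp
  qed
  have badv: "(\<Sum>f\<in>F. w f * (if bad f v then 1 else 0)) = (1 - p (fst v)) ^ card (S v)"
    if vV: "v \<in> V" for v
  proof -
    define h where "h c y = p y * (if c \<in> S v \<and> y = fst v then 0 else 1)" for c y
    have "w f * (if bad f v then 1 else 0) = (\<Prod>c\<in>C. h c (f c))" for f
    proof (cases "bad f v")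
      case True
      then have "h c (f c) = p (f c)" if "c \<in> C" for c unfolding h_def bad_def by auto
      then show ?thesis using True unfolding w_def by simp
    next
      case False
      then obtain c where c: "c \<in> S v" "f c = fst v" unfolding bad_def by auto
      then have "c \<in> C" using SC[OF vV] by blast
      moreover have "h c (f c) = 0" using c unfolding h_def by simp
      ultimately have "(\<Prod>c\<in>C. h c (f c)) = 0" using finC by (meson prod_zero_iff)
      then show ?thesis using False by simp
    qed
    then have "(\<Sum>f\<in>F. w f * (if bad f v then 1 else 0)) = (\<Sum>f\<in>F. \<Prod>c\<in>C. h c (f c))"
      by simp
    also have "\<dots> = (\<Prod>c\<in>C. \<Sum>y\<le>s. h c y)"
      unfolding F_def by (rule prod_sum_PiE[symmetric]) (use finC in auto)
    also have "\<dots> = (\<Prod>c\<in>C. if c \<in> S v then 1 - p (fst v) else 1)"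
    proof (rule prod.cong[OF refl])
      fix c assume "c \<in> C"
      show "(\<Sum>y\<le>s. h c y) = (if c \<in> S v then 1 - p (fst v) else 1)"
      proof (cases "c \<in> S v")
        case True
        have "(\<Sum>y\<le>s. h c y) = (\<Sum>y\<le>s. p y) - p (fst v)"
        proof -
          have "(\<Sum>y\<le>s. h c y) = (\<Sum>y\<le>s. p y - (if y = fst v then p y else 0))"
            unfolding h_def using True by (intro sum.cong) auto
          also have "\<dots> = (\<Sum>y\<le>s. p y) - p (fst v)"
            using fstV[OF vV] by (simp add: sum_subtractf)
          finally show ?thesis .
        qed
        then show ?thesis using True psum by simp
      next
        case False
        then show ?thesis unfolding h_def using psum by simp
      qed
    qed
    also have "\<dots> = (\<Prod>c\<in>S v. 1 - p (fst v))"
      using prod.inter_filter[OF finC, of "\<lambda>_. 1 - p (fst v)" "\<lambda>c. c \<in> S v"] SC[OF vV]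
      by (simp add: Int_absorb1 Collect_mem_eq inf.absorb_iff2 prod.If_cases[OF finC])
    also have "\<dots> = (1 - p (fst v)) ^ card (S v)" by simp
    finally show ?thesis .
  qed
  have total: "(\<Sum>f\<in>F. w f * real (card {v\<in>V. bad f v})) < 1"
  proof -
    have "(\<Sum>f\<in>F. w f * real (card {v\<in>V. bad f v}))
        = (\<Sum>f\<in>F. \<Sum>v\<in>V. w f * (if bad f v then 1 else 0))"
      using finV by (simp add: sum_distrib_left[symmetric] sum.If_cases Int_def)
    also have "\<dots> = (\<Sum>v\<in>V. \<Sum>f\<in>F. w f * (if bad f v then 1 else 0))"
      by (rule sum.swap)
    also have "\<dots> = (\<Sum>v\<in>V. (1 - p (fst v)) ^ card (S v))"
      using badv by simp
    also have "\<dots> \<le> (\<Sum>v\<in>V. (1 - p (fst v)) ^ k)"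
    proof (rule sum_mono)
      fix v assume "v \<in> V"
      then show "(1 - p (fst v)) ^ card (S v) \<le> (1 - p (fst v)) ^ k"
        using HS p01 fstV[of v] V_def by (intro power_decreasing) auto
    qed
    also have "\<dots> = (\<Sum>i\<le>s. real (n i) * (1 - p i)^k)"
      unfolding V_def by (rule sum_cmp_vertices)
    finally show ?thesis using small by linarith
  qed
  have "\<exists>f\<in>F. \<forall>v\<in>V. \<not> bad f v"
  proof (rule ccontr)
    assume "\<not> ?thesis"
    then have "\<forall>f\<in>F. {v\<in>V. bad f v} \<noteq> {}" by blast
    then have "\<forall>f\<in>F. 1 \<le> card {v\<in>V. bad f v}" using finV
      by (metis (no_types, lifting) One_nat_def Suc_leI card_gt_0_iff finite_subset mem_Collect_eq subsetI)
    then have "(\<Sum>f\<in>F. w f * 1) \<le> (\<Sum>f\<in>F. w f * real (card {v\<in>V. bad f v}))"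
      using wpos by (intro sum_mono mult_left_mono) auto
    then show False using sumw total by simp
  qed
  then obtain f where fF: "f \<in> F" and good: "\<forall>v\<in>V. \<not> bad f v" by blast
  define col where "col v = (SOME c. c \<in> S v \<and> f c = fst v)" for v
  have colp: "col v \<in> S v \<and> f (col v) = fst v" if "v \<in> V" for v
  proof -
    have "\<exists>c. c \<in> S v \<and> f c = fst v" using good that unfolding bad_def by blast
    then show ?thesis unfolding col_def by (rule someI_ex)
  qed
  show "\<exists>c. (\<forall>v\<in>cmp_vertices s n. c v \<in> S v) \<and>
        (\<forall>u\<in>cmp_vertices s n. \<forall>v\<in>cmp_vertices s n. cmp_adj u v \<longrightarrow> c u \<noteq> c v)"
  proof -
    have "\<forall>v\<in>V. col v \<in> S v" using colp by blast
    moreover have "\<forall>u\<in>V. \<forall>v\<in>V. cmp_adj u v \<longrightarrow> col u \<noteq> col v"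
      using colp unfolding cmp_adj_def by metis
    ultimately show ?thesis unfolding V_def by blast
  qed
qed



lemma binom_ratio:
  assumes "k \<le> a" "a \<le> M" "0 < M"
  shows "real (M choose k) * ((real a - real k) / real M) ^ k \<le> real (a choose k)"
proof -
  have eq: "real (N choose k) * fact k = (\<Prod>i<k. real N - real i)" for N
    using gbinomial_mult_fact'[of "real N" k] by (simp add: binomial_gbinomial atLeast0LessThan)
  have "(\<Prod>i<k. real M - real i) * ((real a - real k) / real M) ^ k
      = (\<Prod>i<k. (real M - real i) * ((real a - real k) / real M))"
    by (simp only: prod.distrib prod_constant card_lessThan)
  also have "\<dots> \<le> (\<Prod>i<k. real a - real i)"
  proof (rule prod_mono)
    fix i assume "i \<in> {..<k}"
    then have i: "i < k" by simp
    have Mi: "0 \<le> real M - real i" "0 \<le> real a - real k" using assms i by auto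
    have "(real M - real i) * (real a - real k) = real M * (real a - real i) - real M * (real k - real i) - real i * (real a - real k)"
      by (simp add: algebra_simps)
    moreover have "0 \<le> real M * (real k - real i)" "0 \<le> real i * (real a - real k)"
      using i assms by auto
    ultimately have "(real M - real i) * (real a - real k) \<le> real M * (real a - real i)" by linarith
    then have "(real M - real i) * ((real a - real k) / real M) \<le> real a - real i"
      using assms(3) by (simp add: field_simps)
    moreover have "0 \<le> (real M - real i) * ((real a - real k) / real M)" using Mi by simp
    ultimately show "0 \<le> (real M - real i) * ((real a - real k) / real M) \<and>
          (real M - real i) * ((real a - real k) / real M) \<le> real a - real i" by simp
  qed
  finally have F: "(\<Prod>i<k. real M - real i) * ((real a - real k) / real M) ^ k \<le> (\<Prod>i<k. real a - real i)" .
  have A: "real (M choose k) * ((real a - real k) / real M) ^ k * fact k = (\<Prod>i<k. real M - real i) * ((real a - real k) / real M) ^ k"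
    by (simp add: eq[of M, symmetric] mult_ac)
  have "real (M choose k) * ((real a - real k) / real M) ^ k * fact k \<le> real (a choose k) * fact k"
    using A F eq[of a] by linarith
  then show ?thesis by simp
qed

lemma card_meeting_sets:
  fixes g :: "nat \<Rightarrow> nat"
  shows "card {A. (A \<subseteq> {..<M} \<and> card A = k) \<and> (\<exists>c\<in>A. g c = i)}
       = (M choose k) - ((M - card {c\<in>{..<M}. g c = i}) choose k)"
    and "(M - card {c\<in>{..<M}. g c = i}) choose k \<le> M choose k"
proof -
  define K where "K = {A. A \<subseteq> {..<M} \<and> card A = k}"
  define D where "D = {..<M} - {c. g c = i}"
  define Bd where "Bd = {A. A \<subseteq> D \<and> card A = k}"
  have cardK: "card K = M choose k" unfolding K_def using n_subsets[of "{..<M}" k] by simp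
  have cardD: "card D = M - card {c\<in>{..<M}. g c = i}"
  proof -
    have "D = {..<M} - {c\<in>{..<M}. g c = i}" unfolding D_def by auto
    then show ?thesis by (simp, subst card_Diff_subset) auto
  qed
  have cardBd: "card Bd = (M - card {c\<in>{..<M}. g c = i}) choose k"
    unfolding Bd_def using n_subsets[of D k] cardD unfolding D_def by simp
  have sub: "Bd \<subseteq> K" unfolding Bd_def K_def D_def by auto
  have finK: "finite K" unfolding K_def by (rule finite_subset[of _ "Pow {..<M}"]) auto
  have eqs: "{A. (A \<subseteq> {..<M} \<and> card A = k) \<and> (\<exists>c\<in>A. g c = i)} = K - Bd"
    unfolding K_def Bd_def D_def by auto
  show "card {A. (A \<subseteq> {..<M} \<and> card A = k) \<and> (\<exists>c\<in>A. g c = i)}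
       = (M choose k) - ((M - card {c\<in>{..<M}. g c = i}) choose k)"
    unfolding eqs using card_Diff_subset[OF finite_subset[OF sub finK] sub] cardK cardBd by simp
  show "(M - card {c\<in>{..<M}. g c = i}) choose k \<le> M choose k"
    using card_mono[OF finK sub] cardK cardBd by simp
qed

lemma prod_cmp_vertices:
  fixes h :: "nat \<Rightarrow> real"
  assumes "\<forall>i\<le>s. 0 \<le> h i \<and> h i \<le> 1" "i0 \<le> s"
  shows "(\<Prod>v\<in>cmp_vertices s n. h (fst v)) \<le> h i0 ^ n i0"
proof -
  have "(\<Prod>v\<in>cmp_vertices s n. h (fst v)) = (\<Prod>i\<le>s. \<Prod>j<n i. h (fst (i, j)))"
    unfolding cmp_vertices_Sigma using prod.Sigma[of "{..s}" "\<lambda>i. {..<n i}" "\<lambda>i j. h i"]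
    by (simp add: split_def)
  also have "\<dots> = (\<Prod>i\<le>s. h i ^ n i)" by simp
  also have "\<dots> = h i0 ^ n i0 * (\<Prod>i\<in>{..s} - {i0}. h i ^ n i)"
    using assms(2) by (simp add: prod.remove)
  also have "\<dots> \<le> h i0 ^ n i0 * 1"
    using assms by (intro mult_left_mono prod_le_1) (auto intro!: power_le_one)
  finally show ?thesis by simp
qed

lemma LB_count:
  fixes s k M :: nat and n :: "nat \<Rightarrow> nat"
  assumes k1: "1 \<le> k" and kM: "k \<le> M"
    and H: "\<forall>g \<in> PiE {..<M} (\<lambda>_. {..s}). \<exists>i\<le>s.
       real (n i) * (real ((M - card {c\<in>{..<M}. g c = i}) choose k) / real (M choose k))
         > real M * ln (real s + 1)"
  shows "\<not> choosable (cmp_vertices s n) cmp_adj k"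
proof
  assume ch: "choosable (cmp_vertices s n) cmp_adj k"
  define V where "V = cmp_vertices s n"
  have finV: "finite V" unfolding V_def by (rule finite_cmp_vertices)
  have fstV: "v \<in> V \<Longrightarrow> fst v \<le> s" for v unfolding V_def cmp_vertices_def by auto
  define K where "K = {A. A \<subseteq> {..<M} \<and> card A = k}"
  define Mk where "Mk = M choose k"
  have cardK: "card K = Mk" unfolding K_def Mk_def using n_subsets[of "{..<M}" k] by simp
  have finK: "finite K" unfolding K_def by (rule finite_subset[of _ "Pow {..<M}"]) auto
  have Mkpos: "0 < Mk" unfolding Mk_def using kM by simp
  define G where "G = PiE {..<M} (\<lambda>_. {..s})"
  have finG: "finite G" unfolding G_def by (simp add: finite_PiE)
  have cardG: "card G = (Suc s) ^ M" unfolding G_def by (simp add: card_PiE)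
  define cnt where "cnt g i = card {c\<in>{..<M}. g c = i}" for g :: "nat \<Rightarrow> nat" and i
  define Good where "Good g = PiE V (\<lambda>v. {A. (A \<subseteq> {..<M} \<and> card A = k) \<and> (\<exists>c\<in>A. g c = fst v)})"
    for g :: "nat \<Rightarrow> nat"
  have cover: "PiE V (\<lambda>_. K) \<subseteq> (\<Union>g\<in>G. Good g)"
  proof
    fix S assume S: "S \<in> PiE V (\<lambda>_. K)"
    then have "\<forall>v\<in>V. S v \<subseteq> {..<M} \<and> card (S v) = k"
      unfolding K_def by (simp add: PiE_iff)
    then have "\<forall>v\<in>V. finite (S v) \<and> k \<le> card (S v)"
      using finite_subset[OF _ finite_lessThan] by auto
    then obtain col where col: "\<forall>v\<in>V. col v \<in> S v" "\<forall>u\<in>V. \<forall>v\<in>V. cmp_adj u v \<longrightarrow> col u \<noteq> col v"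
      using ch unfolding choosable_def V_def by blast
    define g where "g c = (if c < M then (if \<exists>v\<in>V. col v = c then fst (SOME v. v \<in> V \<and> col v = c) else 0) else undefined)" for c
    have gG: "g \<in> G"
      unfolding G_def
    proof (rule PiE_I)
      fix c assume "c \<in> {..<M}"
      show "g c \<in> {..s}"
      proof (cases "\<exists>v\<in>V. col v = c")
        case True
        then have "(SOME v. v \<in> V \<and> col v = c) \<in> V" by (metis (mono_tags, lifting) someI_ex)
        then show ?thesis using True \<open>c \<in> {..<M}\<close> fstV unfolding g_def by auto
      qed (use \<open>c \<in> {..<M}\<close> g_def in auto)
    next
      fix c assume "c \<notin> {..<M}" then show "g c = undefined" unfolding g_def by auto
    qed
    have "S \<in> Good g" unfolding Good_def
    proof (rule PiE_I)
      fix v assume vV: "v \<in> V"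
      have SvK: "S v \<in> K" using S vV by auto
      have cS: "col v \<in> S v" using col vV by auto
      then have cM: "col v < M" using SvK unfolding K_def by auto
      define v' where "v' = (SOME w. w \<in> V \<and> col w = col v)"
      have v': "v' \<in> V \<and> col v' = col v" unfolding v'_def using vV by (metis (mono_tags, lifting) someI_ex)
      have "fst v' = fst v" using col(2) v' vV unfolding cmp_adj_def by metis
      then have "g (col v) = fst v" unfolding g_def v'_def using cM vV by auto
      then show "S v \<in> {A. (A \<subseteq> {..<M} \<and> card A = k) \<and> (\<exists>c\<in>A. g c = fst v)}"
        using SvK cS unfolding K_def by auto
    next
      fix v assume "v \<notin> V" then show "S v = undefined" using S by auto
    qed
    then show "S \<in> (\<Union>g\<in>G. Good g)" using gG by auto
  qed
  define r where "r g i = real ((M - cnt g i) choose k) / real Mk" for g i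
  have r01: "0 \<le> r g i \<and> r g i \<le> 1" for g i
    unfolding r_def cnt_def using card_meeting_sets(2)[of M g i k] Mkpos Mk_def by auto
  have cardGood: "real (card (Good g)) = real Mk ^ card V * (\<Prod>v\<in>V. 1 - r g (fst v))" for g
  proof -
    have "card (Good g) = (\<Prod>v\<in>V. card {A. (A \<subseteq> {..<M} \<and> card A = k) \<and> (\<exists>c\<in>A. g c = fst v)})"
      unfolding Good_def using finV by (rule card_PiE)
    also have "\<dots> = (\<Prod>v\<in>V. Mk - ((M - cnt g (fst v)) choose k))"
      unfolding cnt_def Mk_def by (rule prod.cong[OF refl]) (rule card_meeting_sets(1))
    finally have "real (card (Good g)) = (\<Prod>v\<in>V. real (Mk - ((M - cnt g (fst v)) choose k)))"
      by simp
    also have "\<dots> = (\<Prod>v\<in>V. real Mk * (1 - r g (fst v)))"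
    proof (rule prod.cong[OF refl])
      fix v
      have le: "(M - cnt g (fst v)) choose k \<le> Mk"
        unfolding cnt_def Mk_def by (rule card_meeting_sets(2))
      show "real (Mk - ((M - cnt g (fst v)) choose k)) = real Mk * (1 - r g (fst v))"
        unfolding r_def using le Mkpos by (simp add: of_nat_diff field_simps)
    qed
    also have "\<dots> = real Mk ^ card V * (\<Prod>v\<in>V. 1 - r g (fst v))"
      by (simp add: prod.distrib)
    finally show ?thesis .
  qed
  have each: "real (card (Good g)) < real Mk ^ card V / real (Suc s) ^ M" if gG: "g \<in> G" for g
  proof -
    obtain i where i: "i \<le> s" and big: "real (n i) * r g i > real M * ln (real s + 1)"
      using H gG unfolding G_def r_def cnt_def Mk_def by blast
    have "(\<Prod>v\<in>V. 1 - r g (fst v)) \<le> (1 - r g i) ^ n i"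
      unfolding V_def by (rule prod_cmp_vertices) (use r01 i in auto)
    also have "\<dots> \<le> exp (- r g i) ^ n i"
      using r01[of g i] by (intro power_mono) (auto simp: exp_ge_add_one_self [of "- r g i", simplified])
    also have "\<dots> = exp (- (real (n i) * r g i))"
      by (simp add: exp_of_nat_mult[symmetric])
    also have "\<dots> < exp (- (real M * ln (real s + 1)))"
      using big by simp
    also have "\<dots> = 1 / real (Suc s) ^ M"
    proof -
      have "exp (real M * ln (real s + 1)) = (real s + 1) ^ M"
        by (simp add: exp_of_nat_mult)
      then show ?thesis by (simp add: exp_minus field_simps)
    qed
    finally have "(\<Prod>v\<in>V. 1 - r g (fst v)) < 1 / real (Suc s) ^ M" .
    then have "real Mk ^ card V * (\<Prod>v\<in>V. 1 - r g (fst v)) < real Mk ^ card V * (1 / real (Suc s) ^ M)"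
      using Mkpos by (intro mult_strict_left_mono) auto
    then show ?thesis using cardGood[of g] by simp
  qed
  have "real (card (PiE V (\<lambda>_. K))) \<le> real (card (\<Union>g\<in>G. Good g))"
    using cover finG finV finK by (intro of_nat_mono card_mono) (auto simp: Good_def intro!: finite_PiE)
  also have "\<dots> \<le> real (\<Sum>g\<in>G. card (Good g))"
    using card_UN_le[OF finG, of Good] by linarith
  also have "\<dots> = (\<Sum>g\<in>G. real (card (Good g)))" by simp
  also have "\<dots> < (\<Sum>g\<in>G. real Mk ^ card V / real (Suc s) ^ M)"
  proof (rule sum_strict_mono[OF finG])
    show "G \<noteq> {}" using cardG by (metis card.empty zero_less_Suc zero_less_power less_irrefl)
  qed (rule each)
  also have "\<dots> = real Mk ^ card V"
    using cardG by simp
  also have "\<dots> = real (card (PiE V (\<lambda>_. K)))"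
    using finV cardK by (simp add: card_PiE)
  finally show False by simp
qed



lemma card_fibres_sum:
  fixes g :: "nat \<Rightarrow> nat"
  assumes "finite A" "g ` A \<subseteq> {..s}"
  shows "(\<Sum>i\<le>s. card {c\<in>A. g c = i}) = card A"
proof -
  have "(\<Sum>i\<le>s. card {c\<in>A. g c = i}) = (\<Sum>i\<le>s. \<Sum>c\<in>A. if g c = i then 1 else 0)"
    using assms(1) by (simp add: sum.If_cases Int_def)
  also have "\<dots> = (\<Sum>c\<in>A. \<Sum>i\<le>s. if g c = i then 1 else 0)" by (rule sum.swap)
  also have "\<dots> = (\<Sum>c\<in>A. 1)"
    using assms(2) by (intro sum.cong refl) auto
  finally show ?thesis by simp
qed

lemma root_bound:
  fixes x y :: real and k :: nat
  assumes "k \<ge> 1" "0 \<le> y" "x ^ k \<le> y"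
  shows "x \<le> y powr (1 / real k)"
proof (cases "x \<le> 0")
  case True then show ?thesis by (meson order.trans powr_ge_zero)
next
  case False
  then have x: "0 < x" by simp
  have "x = (x ^ k) powr (1 / real k)"
    using x assms(1) by (simp add: powr_realpow[symmetric] powr_powr)
  also have "\<dots> \<le> y powr (1 / real k)"
    using x assms by (intro powr_mono2) auto
  finally show ?thesis .
qed

lemma LB_num:
  fixes s k M :: nat and n :: "nat \<Rightarrow> nat"
  assumes k1: "1 \<le> k" and kM: "k \<le> M" and npos: "\<forall>i\<le>s. 1 \<le> n i"
    and cond: "real s - real (s+1) * real k / real M >
       (real M * ln (real s + 1)) powr (1 / real k) * (\<Sum>i\<le>s. real (n i) powr (- 1 / real k))"
  shows "\<not> choosable (cmp_vertices s n) cmp_adj k"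
proof (rule LB_count[OF k1 kM], rule ballI, rule ccontr)
  fix g :: "nat \<Rightarrow> nat" assume gG: "g \<in> PiE {..<M} (\<lambda>_. {..s})"
  define B where "B = real M * ln (real s + 1)"
  have B0: "0 \<le> B" unfolding B_def by simp
  define cnt where "cnt i = card {c\<in>{..<M}. g c = i}" for i
  define r where "r i = real ((M - cnt i) choose k) / real (M choose k)" for i
  have Mpos: "0 < M" using k1 kM by simp
  have Mk: "0 < real (M choose k)" using kM by simp
  assume "\<not> (\<exists>i\<le>s. real (n i) * (real ((M - card {c\<in>{..<M}. g c = i}) choose k) / real (M choose k))
         > real M * ln (real s + 1))"
  then have small: "\<forall>i\<le>s. real (n i) * r i \<le> B" unfolding r_def cnt_def B_def by (auto simp: not_less)
  have each: "(real M - real (cnt i) - real k) / real M \<le> B powr (1 / real k) * real (n i) powr (- 1 / real k)"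
    if i: "i \<le> s" for i
  proof -
    have ni: "1 \<le> real (n i)" using npos i by simp
    have rhs: "B powr (1 / real k) * real (n i) powr (- 1 / real k) = (B / real (n i)) powr (1 / real k)"
      using ni B0 by (simp add: powr_divide powr_minus_divide)
    show ?thesis
    proof (cases "cnt i + k \<le> M")
      case True
      define a where "a = M - cnt i"
      have ka: "k \<le> a" "a \<le> M" using True unfolding a_def by auto
      have ra: "real a = real M - real (cnt i)" using True unfolding a_def by simp
      have "real (M choose k) * ((real a - real k) / real M) ^ k \<le> real (a choose k)"
        by (rule binom_ratio[OF ka Mpos])
      then have "((real a - real k) / real M) ^ k \<le> r i"
        unfolding r_def a_def[symmetric] using Mk by (simp add: field_simps)
      then have "real (n i) * ((real a - real k) / real M) ^ k \<le> B"
        using small i ni by (meson mult_left_mono order.trans of_nat_0_le_iff)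
      then have "((real a - real k) / real M) ^ k \<le> B / real (n i)"
        using ni by (simp add: field_simps)
      then have "(real a - real k) / real M \<le> (B / real (n i)) powr (1 / real k)"
        using B0 ni k1 by (intro root_bound) auto
      then show ?thesis using ra rhs by simp
    next
      case False
      then have "(real M - real (cnt i) - real k) / real M \<le> 0" using Mpos
        by (simp add: divide_nonpos_pos)
      also have "0 \<le> B powr (1 / real k) * real (n i) powr (- 1 / real k)" by simp
      finally show ?thesis .
    qed
  qed
  have sumcnt: "(\<Sum>i\<le>s. cnt i) = M"
    unfolding cnt_def using card_fibres_sum[of "{..<M}" g s] gG by (auto simp: PiE_def Pi_def)
  have E: "(\<Sum>i\<le>s. (real M - real (cnt i) - real k) / real M) = real s - real (s+1) * real k / real M"
  proof -
    have S0: "(\<Sum>i\<le>s. real (cnt i)) = real M" using sumcnt by (simp flip: of_nat_sum)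
    have "(\<Sum>i\<le>s. real M - real (cnt i) - real k) = (\<Sum>i\<le>s. (real M - real k) - real (cnt i))"
      by (simp add: algebra_simps)
    also have "\<dots> = (real s + 1) * (real M - real k) - real M"
      by (simp add: sum_subtractf S0)
    finally have S1: "(\<Sum>i\<le>s. real M - real (cnt i) - real k) = (real s + 1) * (real M - real k) - real M" .
    have "(\<Sum>i\<le>s. (real M - real (cnt i) - real k) / real M) = ((real s + 1) * (real M - real k) - real M) / real M"
      by (simp add: sum_divide_distrib[symmetric] S1)
    also have "\<dots> = real s - real (s+1) * real k / real M"
      using Mpos by (simp add: field_simps)
    finally show ?thesis .
  qed
  have "(\<Sum>i\<le>s. (real M - real (cnt i) - real k) / real M)
      \<le> (\<Sum>i\<le>s. B powr (1 / real k) * real (n i) powr (- 1 / real k))"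
    using each by (intro sum_mono) auto
  then have "real s - real (s+1) * real k / real M \<le> B powr (1 / real k) * (\<Sum>i\<le>s. real (n i) powr (- 1 / real k))"
    using E by (simp add: sum_distrib_left)
  then show False using cond unfolding B_def by simp
qed



lemma ch_le:
  assumes "choosable (cmp_vertices s n) cmp_adj k"
  shows "ch_complete_multipartite s n \<le> k"
  unfolding ch_complete_multipartite_def choice_number_def using assms by (rule Least_le)

lemma ch_gt:
  assumes "choosable (cmp_vertices s n) cmp_adj k'" "\<not> choosable (cmp_vertices s n) cmp_adj k"
  shows "k < ch_complete_multipartite s n"
proof (rule ccontr)
  assume "\<not> k < ch_complete_multipartite s n"
  moreover have "choosable (cmp_vertices s n) cmp_adj (ch_complete_multipartite s n)"
    unfolding ch_complete_multipartite_def choice_number_def using assms(1) by (rule LeastI)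
  ultimately show False using assms(2) choosable_mono by (metis not_less)
qed

lemma ch_bounds:
  fixes s :: nat and n :: "nat \<Rightarrow> nat" and t e :: real
  assumes s1: "s \<ge> 1" and n02: "2 \<le> n 0" and nmono: "\<forall>i\<le>s. n 0 \<le> n i"
    and sumeq: "(\<Sum>i\<le>s. real (n i) powr (- t)) = real s"
    and t0: "0 < t" and e0: "0 < e" and e4: "e \<le> 1/4" and te: "t < e"
    and UBc: "(real s + 1) * real (n 0) powr (- e) < 1"
    and LBc: "8 * ln (real s + 1) * (1 / t)^2 < real (n 0) powr (e / 2)"
  shows "1 - e < real (ch_complete_multipartite s n) * t"
    and "real (ch_complete_multipartite s n) * t < 1 + 2 * e"
proof -
  define N0 where "N0 = real (n 0)"
  have N0: "2 \<le> N0" using n02 unfolding N0_def by simp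
  have ni: "i \<le> s \<Longrightarrow> N0 \<le> real (n i)" for i using nmono unfolding N0_def by simp
  have ni1: "i \<le> s \<Longrightarrow> 1 \<le> real (n i)" for i using ni N0 by fastforce
  define ch where "ch = ch_complete_multipartite s n"
  define ku where "ku = nat \<lceil>(1 + e) / t\<rceil>"
  have ku1: "(1 + e) / t \<le> real ku" "real ku < (1 + e) / t + 1"
    unfolding ku_def using t0 e0 by (auto simp: of_nat_nat) linarith+
  have tku: "1 + e \<le> t * real ku" using ku1(1) t0 by (simp add: field_simps)
  define p where "p i = 1 - real (n i) powr (- t)" for i
  have chooseU: "choosable (cmp_vertices s n) cmp_adj ku"
  proof (rule UB)
    show "\<forall>i\<le>s. 0 \<le> p i \<and> p i \<le> 1"
    proof (intro allI impI)
      fix i assume i: "i \<le> s"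
      have "real (n i) powr (- t) \<le> real (n i) powr 0"
        using ni1[OF i] t0 by (intro powr_mono) auto
      then show "0 \<le> p i \<and> p i \<le> 1" unfolding p_def using ni1[OF i] by simp
    qed
    show "(\<Sum>i\<le>s. p i) = 1" unfolding p_def using sumeq by (simp add: sum_subtractf)
    have "(\<Sum>i\<le>s. real (n i) * (1 - p i) ^ ku) \<le> (\<Sum>i\<le>s. N0 powr (- e))"
    proof (rule sum_mono)
      fix i assume "i \<in> {..s}"
      then have i: "i \<le> s" by simp
      have "real (n i) * (1 - p i) ^ ku = real (n i) powr (1 - t * real ku)"
      proof -
        have e1: "(1 - p i) ^ ku = real (n i) powr (- t * real ku)"
          unfolding p_def using ni1[OF i] by (simp add: powr_realpow[symmetric] powr_powr)
        have e2: "real (n i) powr (1 - t * real ku) = real (n i) powr 1 * real (n i) powr (- t * real ku)"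
          by (subst powr_add[symmetric]) simp
        show ?thesis using e1 e2 ni1[OF i] by simp
      qed
      also have "\<dots> \<le> real (n i) powr (- e)"
        using ni1[OF i] tku by (intro powr_mono) auto
      also have "\<dots> \<le> N0 powr (- e)"
        using ni[OF i] N0 e0 by (intro powr_mono2') auto
      finally show "real (n i) * (1 - p i) ^ ku \<le> N0 powr (- e)" .
    qed
    also have "\<dots> = (real s + 1) * N0 powr (- e)" by simp
    also have "\<dots> < 1" using UBc unfolding N0_def .
    finally show "(\<Sum>i\<le>s. real (n i) * (1 - p i) ^ ku) < 1" .
  qed
  have "ch \<le> ku" unfolding ch_def by (rule ch_le[OF chooseU])
  then have "real ch * t \<le> real ku * t" using t0 by (intro mult_right_mono) auto
  also have "\<dots> < ((1 + e) / t + 1) * t" using ku1(2) t0 by (intro mult_strict_right_mono) auto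
  also have "\<dots> = 1 + e + t" using t0 by (simp add: field_simps)
  finally show "real (ch_complete_multipartite s n) * t < 1 + 2 * e" using te unfolding ch_def by simp
  define k where "k = nat \<lfloor>(1 - e) / t\<rfloor>"
  have k1: "real k \<le> (1 - e) / t" "(1 - e) / t < real k + 1"
  proof -
    have "0 \<le> (1 - e) / t" using t0 e4 by simp
    then show "real k \<le> (1 - e) / t" "(1 - e) / t < real k + 1"
      unfolding k_def by (simp_all add: of_nat_nat)
  qed
  have big: "3 \<le> (1 - e) / t" using t0 te e4 by (simp add: field_simps)
  have kge1: "1 \<le> k" using k1 big by linarith
  have kpos: "0 < real k" using kge1 by simp
  have tk: "1/2 \<le> t * real k"
  proof -
    have "1 - e < t * (real k + 1)" using k1(2) t0 by (simp add: field_simps)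
    then show ?thesis using te e4 by (simp add: algebra_simps)
  qed
  have tk2: "t * real k \<le> 1 - e" using k1(1) t0 by (simp add: field_simps)
  have kt: "real k \<le> 1 / t" using tk2 t0 e0 by (simp add: field_simps)
  define M where "M = 4 * k^2"
  have kM: "k \<le> M" unfolding M_def using kge1 by (simp add: power2_eq_square)
  have Mreal: "real M = 4 * real k ^ 2" unfolding M_def by simp
  have notU: "\<not> choosable (cmp_vertices s n) cmp_adj k"
  proof (rule LB_num[OF kge1 kM])
    show "\<forall>i\<le>s. 1 \<le> n i" using ni1 by (metis of_nat_1 of_nat_le_iff)
    define X where "X = real M * ln (real s + 1) * N0 powr (- (t * e * real k))"
    have X0: "0 \<le> X" unfolding X_def by simp
    have inv: "t * (1 + e) \<le> 1 / real k"
    proof -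
      have "t * real k * (1 + e) \<le> (1 - e) * (1 + e)" by (rule mult_right_mono[OF tk2]) (use e0 in simp)
      then have "t * (1 + e) * real k \<le> (1 - e) * (1 + e)" by (simp add: mult_ac)
      also have "\<dots> \<le> 1" by (simp add: algebra_simps)
      finally show ?thesis using kpos by (simp add: field_simps)
    qed
    have A: "(\<Sum>i\<le>s. real (n i) powr (- 1 / real k)) \<le> real s * N0 powr (- (t * e))"
    proof -
      have "(\<Sum>i\<le>s. real (n i) powr (- 1 / real k)) \<le> (\<Sum>i\<le>s. real (n i) powr (- t) * N0 powr (- (t * e)))"
      proof (rule sum_mono)
        fix i assume "i \<in> {..s}"
        then have i: "i \<le> s" by simp
        have "real (n i) powr (- 1 / real k) \<le> real (n i) powr (- t - t * e)"
          using ni1[OF i] inv by (intro powr_mono) (auto simp: algebra_simps)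
        also have "\<dots> = real (n i) powr (- t) * real (n i) powr (- (t * e))"
          by (simp add: powr_add[symmetric])
        also have "\<dots> \<le> real (n i) powr (- t) * N0 powr (- (t * e))"
          using ni[OF i] N0 t0 e0 by (intro mult_left_mono powr_mono2') auto
        finally show "real (n i) powr (- 1 / real k) \<le> real (n i) powr (- t) * N0 powr (- (t * e))" .
      qed
      also have "\<dots> = real s * N0 powr (- (t * e))"
        using sumeq by (simp add: sum_distrib_right[symmetric])
      finally show ?thesis .
    qed
    have B: "(real M * ln (real s + 1)) powr (1 / real k) * N0 powr (- (t * e)) = X powr (1 / real k)"
    proof -
      have "N0 powr (- (t * e)) = (N0 powr (- (t * e * real k))) powr (1 / real k)"
        using kpos by (simp add: powr_powr)
      then show ?thesis unfolding X_def by (simp add: powr_mult)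
    qed
    have C: "X < 1/2"
    proof -
      have P1: "N0 powr (- (t * e * real k)) \<le> N0 powr (- (e / 2))"
        using N0 tk e0 by (intro powr_mono) (auto simp: mult_left_mono algebra_simps)
      have P2: "real M * ln (real s + 1) \<le> 4 * (1 / t)^2 * ln (real s + 1)"
      proof -
        have "real k ^ 2 \<le> (1 / t) ^ 2" using kt kpos by (intro power_mono) auto
        then show ?thesis unfolding Mreal by (intro mult_right_mono) auto
      qed
      have "X \<le> 4 * (1 / t)^2 * ln (real s + 1) * N0 powr (- (e / 2))"
        unfolding X_def by (rule mult_mono[OF P2 P1]) auto
      also have "\<dots> < 1/2"
      proof -
        define Y where "Y = N0 powr (e / 2)"
        have Y: "0 < Y" using N0 unfolding Y_def by simp
        have Q: "2 * (4 * (1 / t)^2 * ln (real s + 1)) < Y" using LBc unfolding Y_def N0_def by (simp add: mult_ac)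
        have "4 * (1 / t)^2 * ln (real s + 1) * N0 powr (- (e / 2)) = (4 * (1 / t)^2 * ln (real s + 1)) / Y"
          unfolding Y_def by (simp add: powr_minus_divide)
        also have "\<dots> < 1/2" using Y Q by (simp add: divide_less_eq)
        finally show ?thesis .
      qed
      finally show ?thesis .
    qed
    have D: "1/2 \<le> (1 - 1 / (2 * real k)) ^ k"
    proof -
      have "1 + real k * (- 1 / (2 * real k)) \<le> (1 + (- 1 / (2 * real k))) ^ k"
        using kpos by (intro Bernoulli_inequality) (auto simp: field_simps)
      then show ?thesis using kpos by simp
    qed
    have E: "X powr (1 / real k) < 1 - 1 / (2 * real k)"
    proof -
      have "X powr (1 / real k) < ((1 - 1 / (2 * real k)) ^ k) powr (1 / real k)"
        using X0 C D kpos by (intro powr_less_mono2) auto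
      also have "\<dots> = 1 - 1 / (2 * real k)"
      proof -
        have pos: "0 < 1 - 1 / (2 * real k)" using kge1 by (simp add: field_simps)
        then show ?thesis using kpos by (simp add: powr_realpow[symmetric, OF pos] powr_powr)
      qed
      finally show ?thesis .
    qed
    have F: "real s * (1 - 1 / (2 * real k)) \<le> real s - real (s+1) * real k / real M"
    proof -
      have "real (s+1) * real k / real M = (real s + 1) / (4 * real k)"
        unfolding Mreal using kpos by (simp add: power2_eq_square field_simps)
      also have "\<dots> \<le> (2 * real s) / (4 * real k)"
        using s1 kpos by (intro divide_right_mono) auto
      also have "\<dots> = real s * (1 / (2 * real k))" by (simp add: field_simps)
      finally show ?thesis by (simp add: algebra_simps)
    qed
    have "(real M * ln (real s + 1)) powr (1 / real k) * (\<Sum>i\<le>s. real (n i) powr (- 1 / real k))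
        \<le> (real M * ln (real s + 1)) powr (1 / real k) * (real s * N0 powr (- (t * e)))"
      using A by (intro mult_left_mono) auto
    also have "\<dots> = real s * X powr (1 / real k)" using B by (simp add: mult_ac)
    also have "\<dots> < real s * (1 - 1 / (2 * real k))" using E s1 by simp
    also have "\<dots> \<le> real s - real (s+1) * real k / real M" by (rule F)
    finally show "real s - real (s+1) * real k / real M >
       (real M * ln (real s + 1)) powr (1 / real k) * (\<Sum>i\<le>s. real (n i) powr (- 1 / real k))" .
  qed
  have "k < ch" unfolding ch_def by (rule ch_gt[OF chooseU notU])
  then have "real k + 1 \<le> real ch" by simp
  then have "(1 - e) / t < real ch" using k1(2) by linarith
  then show "1 - e < real (ch_complete_multipartite s n) * t" using t0 unfolding ch_def by (simp add: field_simps)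
qed



lemma chain_mono:
  fixes n :: "nat \<Rightarrow> nat"
  assumes mono: "\<forall>i<s. n i \<le> n (Suc i)" and ij: "i \<le> j" and js: "j \<le> s"
  shows "n i \<le> n j"
  using ij js
proof (induction j rule: dec_induct)
  case base then show ?case by simp
next
  case (step k)
  then have "k < s" by simp
  then have "n k \<le> n (Suc k)" using mono by simp
  moreover have "n i \<le> n k" using step by simp
  ultimately show ?case by simp
qed

lemma per_m:
  fixes s :: nat and n :: "nat \<Rightarrow> nat" and x0 :: real
  assumes s1: "s \<ge> 1" and n02: "2 \<le> n 0" and mono: "\<forall>i<s. n i \<le> n (Suc i)"
    and x0: "x0 \<ge> 1"
    and root: "real s * x0 - 1 - (\<Sum>j<s. x0 powr ((log 2 (n s) / log 2 (n j) - 1) / (log 2 (n s) / log 2 (n j)))) = 0"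
  shows "\<forall>i\<le>s. n 0 \<le> n i"
    and "(\<Sum>i\<le>s. real (n i) powr (- (log 2 x0 / log 2 (n s)))) = real s"
    and "0 < log 2 x0 / log 2 (n s)"
    and "real (n 0) powr (log 2 x0 / log 2 (n s)) \<le> 2"
    and "1 + 1 / real s \<le> real (n s) powr (log 2 x0 / log 2 (n s))"
proof -
  show ni: "\<forall>i\<le>s. n 0 \<le> n i" using chain_mono[OF mono] by auto
  define t where "t = log 2 x0 / log 2 (n s)"
  have nge: "i \<le> s \<Longrightarrow> 2 \<le> real (n i)" for i using ni n02 by (metis le_trans of_nat_le_iff of_nat_numeral)
  have nles: "i \<le> s \<Longrightarrow> n i \<le> n s" for i using chain_mono[OF mono, of i s] by simp
  have x0p: "0 < x0" using x0 by simp
  have lns: "0 < ln (real (n s))" using nge[of s] by simp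
  have t_eq: "t = ln x0 / ln (real (n s))" unfolding t_def log_def by simp
  have trm: "x0 powr ((log 2 (n s) / log 2 (n j) - 1) / (log 2 (n s) / log 2 (n j))) = x0 * real (n j) powr (- t)"
    if j: "j < s" for j
  proof -
    have lnj: "0 < ln (real (n j))" using nge[of j] j by simp
    have ex: "(log 2 (n s) / log 2 (n j) - 1) / (log 2 (n s) / log 2 (n j)) = 1 - ln (real (n j)) / ln (real (n s))"
      unfolding log_def using lnj lns by (simp add: field_simps)
    have "x0 * real (n j) powr (- t) = exp (ln x0) * exp (- t * ln (real (n j)))"
      using x0p nge[of j] j by (simp add: powr_def)
    also have "\<dots> = exp ((1 - ln (real (n j)) / ln (real (n s))) * ln x0)"
      unfolding t_eq using lns by (simp add: exp_add[symmetric] field_simps)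
    also have "\<dots> = x0 powr (1 - ln (real (n j)) / ln (real (n s)))"
      using x0p by (simp add: powr_def)
    finally show ?thesis using ex by simp
  qed
  have last: "real (n s) powr (- t) = 1 / x0"
  proof -
    have "real (n s) powr (- t) = exp (- ln x0)"
      using nge[of s] lns unfolding t_eq by (simp add: powr_def)
    then show ?thesis using x0p by (simp add: exp_minus inverse_eq_divide)
  qed
  have "(\<Sum>j<s. x0 powr ((log 2 (n s) / log 2 (n j) - 1) / (log 2 (n s) / log 2 (n j))))
       = x0 * (\<Sum>j<s. real (n j) powr (- t))"
    using trm by (simp add: sum_distrib_left)
  then have "real s * x0 - 1 - x0 * (\<Sum>j<s. real (n j) powr (- t)) = 0" using root by simp
  then have "(\<Sum>j<s. real (n j) powr (- t)) = real s - 1 / x0" using x0p by (simp add: field_simps)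
  then have S: "(\<Sum>i\<le>s. real (n i) powr (- t)) = real s"
    using last by (simp add: lessThan_Suc_atMost[symmetric])
  then show "(\<Sum>i\<le>s. real (n i) powr (- (log 2 x0 / log 2 (n s)))) = real s" unfolding t_def .
  have t0: "0 \<le> t" unfolding t_def using x0 nge[of s] by simp
  show "0 < log 2 x0 / log 2 (n s)"
  proof (rule ccontr)
    assume "\<not> 0 < log 2 x0 / log 2 (n s)"
    then have "t = 0" using t0 unfolding t_def by simp
    have one: "real (n i) powr (- t) = 1" if "i \<le> s" for i
    proof -
      have "real (n i) \<noteq> 0" using nge[OF that] by simp
      then show ?thesis using \<open>t = 0\<close> by simp
    qed
    then have "(\<Sum>i\<le>s. real (n i) powr (- t)) = (\<Sum>i\<le>s. 1)"
      by (intro sum.cong refl) simp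
    then have "(\<Sum>i\<le>s. real (n i) powr (- t)) = real s + 1" by simp
    then show False using S by simp
  qed
  then have tp: "0 < t" unfolding t_def .
  have "real s \<le> (\<Sum>i\<le>s. real (n 0) powr (- t))"
  proof -
    have n0p: "0 < n 0" using n02 by simp
    show ?thesis unfolding S[symmetric] using ni n0p tp by (intro sum_mono powr_mono2') auto
  qed
  then have A: "real s \<le> (real s + 1) * real (n 0) powr (- t)" by (simp add: add.commute)
  have p0: "0 < real (n 0) powr t" using n02 by simp
  then have "real s * real (n 0) powr t \<le> real s + 1" using A by (simp add: powr_minus field_simps)
  then have "real (n 0) powr t \<le> (real s + 1) / real s" using s1 by (simp add: field_simps)
  also have "\<dots> \<le> 2" using s1 by (simp add: field_simps)
  finally show "real (n 0) powr (log 2 x0 / log 2 (n s)) \<le> 2" unfolding t_def .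
  have "(\<Sum>i\<le>s. real (n s) powr (- t)) \<le> real s"
  proof -
    have npos: "i \<le> s \<Longrightarrow> 0 < real (n i)" for i using nge[of i] by simp
    show ?thesis unfolding S[symmetric] using nles npos tp by (intro sum_mono powr_mono2') auto
  qed
  then have B: "(real s + 1) * real (n s) powr (- t) \<le> real s" by (simp add: add.commute)
  have ps: "0 < real (n s) powr t" using nge[of s] by simp
  then have "real s + 1 \<le> real s * real (n s) powr t" using B by (simp add: powr_minus field_simps)
  then show "1 + 1 / real s \<le> real (n s) powr (log 2 x0 / log 2 (n s))"
    using s1 unfolding t_def[symmetric] by (simp add: field_simps)
qed

lemma asymp1:
  assumes "e > 0" "c > 0"
  shows "eventually (\<lambda>L::real. 8 * ln (real s + 1) * (L / c)^2 < 2 powr (e * sqrt L)) at_top"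
  using assms by real_asymp

lemma asymp2:
  assumes "e > 0"
  shows "eventually (\<lambda>L::real. (real s + 1) * 2 powr (- (2 * e * sqrt L)) < 1) at_top"
  using assms by real_asymp

lemma asymp3:
  assumes "e > 0"
  shows "eventually (\<lambda>L::real. 1 / (2 * sqrt L) < e) at_top"
  using assms by real_asymp

lemma log2_at_top: "filterlim (\<lambda>x::real. log 2 x) at_top at_top"
  by real_asymp

lemma powr_as_2: "0 < x \<Longrightarrow> x powr a = 2 powr (a * log 2 x)"
  by (simp add: powr_def log_def)

theorem theorem4:
  fixes s :: nat and n :: "nat \<Rightarrow> nat \<Rightarrow> nat" and x0 :: "nat \<Rightarrow> real"
  assumes s_pos: "s \<ge> 1"
    and n0_ge2: "\<forall>m. 2 \<le> n m 0"
    and mono: "\<forall>m. \<forall>i<s. n m i \<le> n m (Suc i)"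
    and ns_inf: "filterlim (\<lambda>m. n m s) at_top sequentially"
    and n0_size: "\<forall>m. \<exists>\<alpha>::real.
        \<alpha> \<ge> 2 * sqrt (log 2 (n m s) / log 2 (log 2 (n m s)))
        \<and> real (n m 0) = (log 2 (n m s)) powr \<alpha>"
    and x0_root: "\<forall>m. x0 m \<ge> 1 \<and>
        real s * x0 m - 1
        - (\<Sum>j<s. x0 m powr ((log 2 (n m s) / log 2 (n m j) - 1)
                             / (log 2 (n m s) / log 2 (n m j)))) = 0"
  shows "(\<lambda>m. real (ch_complete_multipartite s (n m)))
           \<sim>[sequentially] (\<lambda>m. log 2 (n m s) / log 2 (x0 m))"
proof -
  define L where "L m = log 2 (real (n m s))" for m
  define t where "t m = log 2 (x0 m) / L m" for m
  define ch where "ch m = real (ch_complete_multipartite s (n m))" for m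
  define N0 where "N0 m = real (n m 0)" for m
  have F: "(\<forall>i\<le>s. n m 0 \<le> n m i) \<and> (\<Sum>i\<le>s. real (n m i) powr (- t m)) = real s \<and> 0 < t m
      \<and> N0 m powr t m \<le> 2 \<and> 1 + 1 / real s \<le> real (n m s) powr t m" for m
    using per_m[of s "n m" "x0 m", OF s_pos spec[OF n0_ge2, of m] spec[OF mono, of m]
        conjunct1[OF spec[OF x0_root, of m]] conjunct2[OF spec[OF x0_root, of m]]]
    unfolding t_def L_def N0_def by auto
  have N02: "2 \<le> N0 m" for m using n0_ge2 unfolding N0_def by (metis of_nat_le_iff of_nat_numeral)
  have Ns2: "2 \<le> real (n m s)" for m
  proof -
    have "n m 0 \<le> n m s" using F[of m] by simp
    then have "real (n m 0) \<le> real (n m s)" by simp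
    then show ?thesis using N02[of m] unfolding N0_def by linarith
  qed
  have Lpos: "1 \<le> L m" for m unfolding L_def using Ns2[of m] by simp
  have Linf: "filterlim L at_top sequentially"
    unfolding L_def[abs_def]
    by (rule filterlim_compose[OF log2_at_top filterlim_compose[OF filterlim_real_sequentially ns_inf]])
  define c where "c = log 2 (1 + 1 / real s)"
  have c0: "0 < c"
  proof -
    have h: "1 < 1 + 1 / real s" using s_pos by simp
    show ?thesis unfolding c_def using zero_less_log_cancel_iff[of 2 "1 + 1 / real s"] h by linarith
  qed
  have tL: "c \<le> t m * L m" for m
  proof -
    have p1: "0 < 1 + 1 / real s"
    proof -
      have "0 \<le> 1 / real s" by simp
      then show ?thesis by linarith
    qed
    have p2: "0 < real (n m s) powr t m" using Ns2[of m] by simp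
    have le: "1 + 1 / real s \<le> real (n m s) powr t m" using F[of m] by blast
    have "c \<le> log 2 (real (n m s) powr t m)"
      unfolding c_def using log_le_cancel_iff[of 2, OF _ p1 p2] le by simp
    also have "\<dots> = t m * L m" unfolding L_def by (simp add: log_powr)
    finally show ?thesis .
  qed
  have inv_t: "1 / t m \<le> L m / c" for m
    using tL[of m] F[of m] c0 Lpos[of m] by (simp add: field_simps)
  have tN0: "t m * log 2 (N0 m) \<le> 1" for m
  proof -
    have "t m * log 2 (N0 m) = log 2 (N0 m powr t m)" by (simp add: log_powr)
    also have "\<dots> \<le> log 2 2"
    proof -
      have p2: "0 < N0 m powr t m" using N02[of m] by simp
      have le: "N0 m powr t m \<le> 2" using F[of m] by blast
      show ?thesis using log_le_cancel_iff[of 2, OF _ p2, of 2] le by simp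
    qed
    finally show ?thesis by simp
  qed
  have logN0: "2 * sqrt (L m) \<le> log 2 (N0 m)" if L2: "2 \<le> L m" for m
  proof -
    obtain \<alpha> where a: "\<alpha> \<ge> 2 * sqrt (L m / log 2 (L m))" and eq: "N0 m = L m powr \<alpha>"
      using n0_size unfolding L_def N0_def by blast
    have ll: "1 \<le> log 2 (L m)" using L2 by simp
    have "log 2 (N0 m) = \<alpha> * log 2 (L m)" unfolding eq by (simp add: log_powr)
    also have "\<dots> \<ge> 2 * sqrt (L m / log 2 (L m)) * log 2 (L m)"
      using a ll by (intro mult_right_mono) auto
    finally have A: "2 * sqrt (L m / log 2 (L m)) * log 2 (L m) \<le> log 2 (N0 m)" .
    have "sqrt (L m / log 2 (L m)) * log 2 (L m) = sqrt (L m) * sqrt (log 2 (L m))"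
    proof -
      have "sqrt (L m / log 2 (L m)) * log 2 (L m) = sqrt (L m / log 2 (L m)) * (sqrt (log 2 (L m)) * sqrt (log 2 (L m)))"
        using ll by simp
      also have "\<dots> = sqrt (L m / log 2 (L m) * log 2 (L m)) * sqrt (log 2 (L m))"
        by (simp only: real_sqrt_mult mult.assoc)
      also have "\<dots> = sqrt (L m) * sqrt (log 2 (L m))" using ll by simp
      finally show ?thesis .
    qed
    moreover have "sqrt (L m) \<le> sqrt (L m) * sqrt (log 2 (L m))"
      using ll L2 by (simp add: mult_le_cancel_left1)
    ultimately show ?thesis using A by linarith
  qed
  have main: "eventually (\<lambda>m. 1 - e < ch m * t m \<and> ch m * t m < 1 + 2 * e) sequentially"
    if e0: "0 < e" and e4: "e \<le> 1/4" for e
  proof -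
    have ev: "eventually (\<lambda>L. 2 \<le> L \<and> 8 * ln (real s + 1) * (L / c)^2 < 2 powr (e * sqrt L)
        \<and> (real s + 1) * 2 powr (- (2 * e * sqrt L)) < 1 \<and> 1 / (2 * sqrt L) < e) at_top"
      using eventually_ge_at_top[of "2::real"] asymp1[OF e0 c0, of s] asymp2[OF e0, of s] asymp3[OF e0]
      by eventually_elim auto
    show ?thesis
      using eventually_compose_filterlim[OF ev Linf]
    proof (rule eventually_mono)
      fix m assume H: "2 \<le> L m \<and> 8 * ln (real s + 1) * (L m / c)^2 < 2 powr (e * sqrt (L m))
        \<and> (real s + 1) * 2 powr (- (2 * e * sqrt (L m))) < 1 \<and> 1 / (2 * sqrt (L m)) < e"
      have lN: "2 * sqrt (L m) \<le> log 2 (N0 m)" using logN0 H by simp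
      have sqp: "0 < sqrt (L m)" using H by simp
      have lNp: "0 < log 2 (N0 m)" using lN sqp by linarith
      have N0p: "0 < N0 m" using N02[of m] by simp
      have tp: "0 < t m" using F[of m] by simp
      have te: "t m < e"
      proof -
        have "t m \<le> 1 / log 2 (N0 m)" using tN0[of m] lNp by (simp add: field_simps)
        also have "\<dots> \<le> 1 / (2 * sqrt (L m))"
          by (rule divide_left_mono[OF lN]) (use lNp sqp in auto)
        finally show ?thesis using H by linarith
      qed
      have UBc: "(real s + 1) * real (n m 0) powr (- e) < 1"
      proof -
        have "real (n m 0) powr (- e) = 2 powr (- e * log 2 (N0 m))"
          using powr_as_2[OF N0p] unfolding N0_def by simp
        also have "\<dots> \<le> 2 powr (- (2 * e * sqrt (L m)))"
          using lN e0 by (intro powr_mono) (auto simp: algebra_simps)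
        finally have "(real s + 1) * real (n m 0) powr (- e) \<le> (real s + 1) * 2 powr (- (2 * e * sqrt (L m)))"
          by (intro mult_left_mono) auto
        then show ?thesis using H by linarith
      qed
      have LBc: "8 * ln (real s + 1) * (1 / t m)^2 < real (n m 0) powr (e / 2)"
      proof -
        have "(1 / t m)^2 \<le> (L m / c)^2" using inv_t[of m] tp by (intro power_mono) auto
        then have "8 * ln (real s + 1) * (1 / t m)^2 \<le> 8 * ln (real s + 1) * (L m / c)^2"
          by (intro mult_left_mono) auto
        also have "\<dots> < 2 powr (e * sqrt (L m))" using H by simp
        also have "\<dots> \<le> 2 powr (e / 2 * log 2 (N0 m))"
          using lN e0 by (intro powr_mono) (auto simp: algebra_simps)
        also have "\<dots> = real (n m 0) powr (e / 2)"
          using powr_as_2[OF N0p] unfolding N0_def by simp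
        finally show ?thesis .
      qed
      have sumeq: "(\<Sum>i\<le>s. real (n m i) powr (- t m)) = real s" using F[of m] by simp
      have nmono: "\<forall>i\<le>s. n m 0 \<le> n m i" using F[of m] by simp
      show "1 - e < ch m * t m \<and> ch m * t m < 1 + 2 * e"
        using ch_bounds[OF s_pos spec[OF n0_ge2, of m] nmono sumeq tp e0 e4 te UBc LBc]
        unfolding ch_def by simp
    qed
  qed
  have lim: "((\<lambda>m. ch m * t m) \<longlongrightarrow> 1) sequentially"
  proof (rule order_tendstoI)
    fix a :: real assume a: "a < 1"
    define e where "e = min (1 - a) (1/4)"
    have "0 < e" "e \<le> 1/4" using a unfolding e_def by (auto simp: min_def)
    from main[OF this] show "eventually (\<lambda>m. a < ch m * t m) sequentially"
      by (rule eventually_mono) (auto simp: e_def min_def split: if_splits)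
  next
    fix a :: real assume a: "1 < a"
    define e where "e = min ((a - 1) / 2) (1/4)"
    have "0 < e" "e \<le> 1/4" using a unfolding e_def by (auto simp: min_def)
    have ea: "1 + 2 * e \<le> a" using a unfolding e_def by (auto simp: min_def field_simps)
    from main[OF \<open>0 < e\<close> \<open>e \<le> 1/4\<close>] show "eventually (\<lambda>m. ch m * t m < a) sequentially"
      by (rule eventually_mono) (use ea in linarith)
  qed
  have eq: "(\<lambda>m. real (ch_complete_multipartite s (n m)) / (log 2 (n m s) / log 2 (x0 m))) = (\<lambda>m. ch m * t m)"
    unfolding ch_def t_def L_def by (intro ext) simp
  show ?thesis
    by (rule asymp_equivI') (use lim eq in simp)
qed

end
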